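(* Let $n,k\ge1$, $d\ge3$. The cumulant homoscedastic secant variety $\log(\operatorname{Sec}^H_k(\mathcal G_{n,d}))\subseteq\mathbb{A}^K_{n,d}$ is a cone over $C^0_{n,k,d}$: writing $\mathbb{A}^K_{n,d}=\mathbb{A}^{K,1}\times\mathbb{A}^{K,2}\times\mathbb{A}^{K,3}_{n,d}$ (cumulants of order $1$, order $2$, and orders $3$ to $d$), its closure equals $\mathbb{A}^{K,1}\times\mathbb{A}^{K,2}\times C^0_{n,k,d}$, i.e. the first and second order cumulants are unconstrained and the cumulants of orders $3,\dots,d$ range exactly over $C^0_{n,k,d}$.
   Context: Let $u=(u_1,\dots,u_n)$, $V$ the space of real linear forms in $u$. The cumulant space $\mathbb{A}^K_{n,d}$ consists of truncated series $\sum_{1\le|a|\le d}\kappa_au^a/a!$ in $\mathbb{R}[u]/(u)^{d+1}$; $\mathbb{A}^{K,3}_{n,d}$ those with only terms of degree $3,\dots,d$. For a homoscedastic parameter $((\mu_i),(\lambda_i),\Sigma)$ ($\mu_i\in\mathbb{R}^n$, $\sum\lambda_i=1$, $\Sigma$ real symmetric $n\times n$) the cumulant vector is the truncation of $\log\big(\sum_i\lambda_i\exp(u^t\mu_i+\frac12u^t\Sigma u)\big)$; $\log(\operatorname{Sec}^H_k(\mathcal G_{n,d}))$ is the (closure of the) set of these. Let $\Theta^0_{n,k}=\{((L_i),(\lambda_i))\in V^k\times\mathbb{R}^k:\sum\lambda_i=1,\ \sum\lambda_iL_i=0\}$ (centered Dirac mixtures), for $A=((L_i),(\lambda_i))$ let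 $K_A(u)=\log(\sum_i\lambda_ie^{L_i(u)})$ with homogeneous parts $K_A(u)_j$, let $\phi_{n,k,d}:\Theta^0_{n,k}\to\mathbb{A}^{K,3}_{n,d}$, $A\mapsto K_A(u)_3+\dots+K_A(u)_d$, and $C^0_{n,k,d}=\overline{\phi_{n,k,d}(\Theta^0_{n,k})}$. *)

theory Defs
  imports "HOL-Analysis.Analysis"
begin

(* Variables u = (u_1..u_n) are vectors in real^'n ('n finite, n = CARD('n) >= 1).
   A linear form L in V is represented by its coefficient vector mu, L(u) = mu \<bullet> u.
   An element of the cumulant space A^K_{n,d} (a truncated series with terms of degree
   1..d) is represented by its homogeneous components, as polynomial functions:
   c :: nat \<Rightarrow> (real^'n \<Rightarrow> real), c j = degree-j part, c j = 0 outside 1..d.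
   Topology: the product (pointwise) topology of HOL-Analysis Function_Topology. *)

type_synonym 'n cumvec = "nat \<Rightarrow> (real^'n \<Rightarrow> real)"

definition taylor_coeff :: "(real \<Rightarrow> real) \<Rightarrow> nat \<Rightarrow> real" where
  "taylor_coeff g j = (deriv ^^ j) g 0 / fact j"

definition hom_part :: "(real^'n::finite \<Rightarrow> real) \<Rightarrow> nat \<Rightarrow> real^'n \<Rightarrow> real" where
  "hom_part K j v = taylor_coeff (\<lambda>t. K (t *\<^sub>R v)) j"

text \<open>Cumulant generating function of a homoscedastic Gaussian mixture.\<close>
definition K_hom :: "nat \<Rightarrow> (nat \<Rightarrow> real^'n) \<Rightarrow> (nat \<Rightarrow> real) \<Rightarrow> real^'n^'n \<Rightarrow> real^'n \<Rightarrow> real" where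
  "K_hom k mu lam S u =
     ln (\<Sum>i<k. lam i * exp (mu i \<bullet> u + (1/2) * (u \<bullet> (S *v u))))"

definition cum_trunc :: "nat \<Rightarrow> (real^'n \<Rightarrow> real) \<Rightarrow> 'n::finite cumvec" where
  "cum_trunc d K = (\<lambda>j. if 1 \<le> j \<and> j \<le> d then hom_part K j else (\<lambda>_. 0))"

text \<open>log(Sec^H_k(G_{n,d})) before closure: set of cumulant vectors of homoscedastic
  parameters ((mu_i),(lambda_i),Sigma) with sum lambda_i = 1, Sigma symmetric.\<close>
definition logSecH_param :: "nat \<Rightarrow> nat \<Rightarrow> 'n::finite cumvec set" where
  "logSecH_param k d = {cum_trunc d (K_hom k mu lam S) | mu lam S.
       (\<Sum>i<k. lam i) = 1 \<and> transpose S = S}"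

text \<open>Theta^0_{n,k}: centered Dirac mixtures.\<close>
definition Theta0 :: "nat \<Rightarrow> ((nat \<Rightarrow> real^'n) \<times> (nat \<Rightarrow> real)) set" where
  "Theta0 k = {(L, lam). (\<Sum>i<k. lam i) = 1 \<and> (\<Sum>i<k. lam i *\<^sub>R L i) = 0}"

definition K_A :: "nat \<Rightarrow> (nat \<Rightarrow> real^'n) \<Rightarrow> (nat \<Rightarrow> real) \<Rightarrow> real^'n \<Rightarrow> real" where
  "K_A k L lam u = ln (\<Sum>i<k. lam i * exp (L i \<bullet> u))"

definition phi :: "nat \<Rightarrow> nat \<Rightarrow> (nat \<Rightarrow> real^'n) \<times> (nat \<Rightarrow> real) \<Rightarrow> 'n::finite cumvec" where
  "phi k d A = (\<lambda>j. if 3 \<le> j \<and> j \<le> d then hom_part (K_A k (fst A) (snd A)) j else (\<lambda>_. 0))"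

definition C0 :: "nat \<Rightarrow> nat \<Rightarrow> 'n::finite cumvec set" where
  "C0 k d = closure (phi k d ` Theta0 k)"

definition cone_over :: "nat \<Rightarrow> 'n cumvec set \<Rightarrow> 'n::finite cumvec set" where
  "cone_over d C = {c. c 0 = (\<lambda>_. 0)
      \<and> (\<exists>w::real^'n. c 1 = (\<lambda>v. w \<bullet> v))
      \<and> (\<exists>M::real^'n^'n. c 2 = (\<lambda>v. v \<bullet> (M *v v)))
      \<and> (\<forall>j>d. c j = (\<lambda>_. 0))
      \<and> (\<lambda>j. if 3 \<le> j \<and> j \<le> d then c j else (\<lambda>_. 0)) \<in> C}"

end

theory Submission
  imports Defs
begin


definition Cn :: "nat \<Rightarrow> real set \<Rightarrow> (real \<Rightarrow> real) \<Rightarrow> bool" where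
  "Cn n U f \<longleftrightarrow> (\<forall>i\<le>n. \<forall>x\<in>U. (deriv ^^ i) f field_differentiable (at x))"

lemma deriv_funpow_Suc: "(deriv ^^ Suc i) f = (deriv ^^ i) (deriv f)"
  by (simp add: funpow_Suc_right del: funpow.simps)

lemma Cn_Suc: "Cn (Suc n) U f \<longleftrightarrow> (\<forall>x\<in>U. f field_differentiable (at x)) \<and> Cn n U (deriv f)"
  unfolding Cn_def
proof safe
  fix i x assume "\<forall>i\<le>Suc n. \<forall>x\<in>U. (deriv ^^ i) f field_differentiable at x" "i \<le> n" "x \<in> U"
  then show "(deriv ^^ i) (deriv f) field_differentiable at x"
    by (metis Suc_le_mono deriv_funpow_Suc)
next
  fix x assume "\<forall>i\<le>Suc n. \<forall>x\<in>U. (deriv ^^ i) f field_differentiable at x" "x \<in> U"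
  then show "f field_differentiable at x" by (metis funpow_0 le0)
next
  fix i x assume "\<forall>x\<in>U. f field_differentiable at x" "\<forall>i\<le>n. \<forall>x\<in>U. (deriv ^^ i) (deriv f) field_differentiable at x"
    "i \<le> Suc n" "x \<in> U"
  then show "(deriv ^^ i) f field_differentiable at x"
    by (cases i) (auto simp: deriv_funpow_Suc simp del: funpow.simps)
qed

lemma Cn_mono: "Cn n U f \<Longrightarrow> m \<le> n \<Longrightarrow> Cn m U f"
  unfolding Cn_def by auto

lemma higher_deriv_cong_open:
  assumes "open U" "\<And>x. x \<in> U \<Longrightarrow> f x = g x" "x \<in> U"
  shows "(deriv ^^ i) f x = (deriv ^^ i) g x"
  by (rule higher_deriv_cong_ev) (use assms in \<open>auto simp: eventually_nhds\<close>)

lemma fd_transform_open: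
  assumes "g field_differentiable (at x)" "open U" "x \<in> U" "\<And>y. y \<in> U \<Longrightarrow> f y = g y"
  shows "f field_differentiable (at x)"
  using assms unfolding field_differentiable_def
  by (metis has_field_derivative_transform_within_open)

lemma Cn_cong:
  assumes "open U" "\<And>x. x \<in> U \<Longrightarrow> f x = g x" "Cn n U g"
  shows "Cn n U f"
  unfolding Cn_def
proof safe
  fix i x assume "i \<le> n" "x \<in> U"
  have "(deriv ^^ i) g field_differentiable at x" using assms(3) \<open>i \<le> n\<close> \<open>x\<in>U\<close> by (auto simp: Cn_def)
  then show "(deriv ^^ i) f field_differentiable at x"
    by (rule fd_transform_open[OF _ assms(1) \<open>x\<in>U\<close>]) (rule higher_deriv_cong_open[OF assms(1,2)])
qed

lemma higher_deriv_add_Cn: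
  assumes "open U" "Cn n U f" "Cn n U g" "i \<le> Suc n" "x \<in> U"
  shows "(deriv ^^ i) (\<lambda>t. f t + g t) x = (deriv ^^ i) f x + (deriv ^^ i) g x"
  using assms(4,5)
proof (induction i arbitrary: x)
  case 0 then show ?case by simp
next
  case (Suc i)
  have "(deriv ^^ Suc i) (\<lambda>t. f t + g t) x = deriv ((deriv ^^ i) (\<lambda>t. f t + g t)) x" by simp
  also have "\<dots> = deriv (\<lambda>t. (deriv ^^ i) f t + (deriv ^^ i) g t) x"
    by (rule deriv_cong_ev) (use Suc assms(1) in \<open>auto simp: eventually_nhds\<close>)
  also have "\<dots> = deriv ((deriv ^^ i) f) x + deriv ((deriv ^^ i) g) x"
    using assms(2,3) Suc.prems by (intro deriv_add) (auto simp: Cn_def)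
  finally show ?case by simp
qed

lemma Cn_add:
  assumes "open U" "Cn n U f" "Cn n U g"
  shows "Cn n U (\<lambda>t. f t + g t)"
  unfolding Cn_def
proof safe
  fix i x assume i: "i \<le> n" and x: "x \<in> U"
  have "(\<lambda>t. (deriv ^^ i) f t + (deriv ^^ i) g t) field_differentiable at x"
    using assms i x by (intro field_differentiable_add) (auto simp: Cn_def)
  then show "(deriv ^^ i) (\<lambda>t. f t + g t) field_differentiable at x"
    by (rule fd_transform_open[OF _ assms(1) x]) (rule higher_deriv_add_Cn[OF assms], use i in auto)
qed

lemma Cn_mult:
  assumes "open U"
  shows "Cn n U f \<Longrightarrow> Cn n U g \<Longrightarrow> Cn n U (\<lambda>t. f t * g t)"
proof (induction n arbitrary: f g)
  case 0
  then show ?case by (auto simp: Cn_def intro: field_differentiable_mult)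
next
  case (Suc n)
  have fd: "\<forall>x\<in>U. f field_differentiable at x" "\<forall>x\<in>U. g field_differentiable at x"
    and d: "Cn n U (deriv f)" "Cn n U (deriv g)"
    using Suc.prems by (auto simp: Cn_Suc)
  have f0: "Cn n U f" "Cn n U g" using Suc.prems Cn_mono by auto
  have "Cn n U (\<lambda>t. f t * deriv g t + deriv f t * g t)"
    using Suc.IH d f0 by (intro Cn_add assms) auto
  then have "Cn n U (deriv (\<lambda>t. f t * g t))"
    by (rule Cn_cong[OF assms, rotated]) (use fd in auto)
  moreover have "\<forall>x\<in>U. (\<lambda>t. f t * g t) field_differentiable at x"
    using fd by (auto intro: field_differentiable_mult)
  ultimately show ?case by (simp add: Cn_Suc)
qed

lemma Cn_const: "Cn n U (\<lambda>t. c)"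
proof -
  have "(deriv ^^ i) (\<lambda>t. c) = (\<lambda>t. if i = 0 then c else 0)" for i
    by (induction i) auto
  then show ?thesis by (auto simp: Cn_def)
qed

lemma Cn_inverse:
  assumes "open U" "\<And>x. x \<in> U \<Longrightarrow> f x \<noteq> 0"
  shows "Cn n U f \<Longrightarrow> Cn n U (\<lambda>t. inverse (f t))"
proof (induction n)
  case 0
  then show ?case using assms by (auto simp: Cn_def intro!: field_differentiable_inverse)
next
  case (Suc n)
  have fd: "\<forall>x\<in>U. f field_differentiable at x" and d: "Cn n U (deriv f)"
    using Suc.prems by (auto simp: Cn_Suc)
  have IH: "Cn n U (\<lambda>t. inverse (f t))" using Suc Cn_mono by auto
  have "Cn n U (\<lambda>t. ((-1) * deriv f t) * (inverse (f t) * inverse (f t)))"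
    using IH d by (intro Cn_mult assms Cn_const) auto
  then have "Cn n U (deriv (\<lambda>t. inverse (f t)))"
    by (rule Cn_cong[OF assms(1), rotated]) (use fd assms(2) in \<open>auto simp: power2_eq_square field_simps\<close>)
  moreover have "\<forall>x\<in>U. (\<lambda>t. inverse (f t)) field_differentiable at x"
    using fd assms(2) by (auto intro: field_differentiable_inverse)
  ultimately show ?case by (simp add: Cn_Suc)
qed

definition expsum :: "nat \<Rightarrow> (nat \<Rightarrow> real) \<Rightarrow> (nat \<Rightarrow> real) \<Rightarrow> real \<Rightarrow> real" where
  "expsum k c b t = (\<Sum>i<k. c i * exp (t * b i))"

lemma DERIV_expsum: "DERIV (expsum k c b) t :> expsum k (\<lambda>i. c i * b i) b t"
  unfolding expsum_def
  by (auto intro!: derivative_eq_intros simp: sum_distrib_left mult_ac)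

lemma deriv_expsum: "deriv (expsum k c b) = expsum k (\<lambda>i. c i * b i) b"
  by (rule ext, rule DERIV_imp_deriv, rule DERIV_expsum)

lemma higher_deriv_expsum: "(deriv ^^ j) (expsum k c b) = expsum k (\<lambda>i. c i * b i ^ j) b"
proof (induction j)
  case 0 then show ?case by simp
next
  case (Suc j)
  then show ?case by (simp add: deriv_expsum mult_ac)
qed

lemma fd_expsum: "expsum k c b field_differentiable (at x)"
  using DERIV_expsum field_differentiable_def by blast

lemma Cn_expsum: "Cn n U (expsum k c b)"
  unfolding Cn_def higher_deriv_expsum by (auto intro: fd_expsum)

lemma Cn_ident: "Cn n U (\<lambda>t. t)"
proof -
  have "(deriv ^^ i) (\<lambda>t::real. t) = (if i = 0 then (\<lambda>t. t) else if i = 1 then (\<lambda>t. 1) else (\<lambda>t. 0))" for i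
  proof (induction i)
    case (Suc i) then show ?case by (cases i) auto
  qed auto
  then show ?thesis by (auto simp: Cn_def field_differentiable_ident field_differentiable_const)
qed

lemma higher_deriv_zero: "(deriv ^^ i) (\<lambda>t::real. 0) = (\<lambda>t. 0)"
  by (induction i) auto

lemma quad_derivs:
  fixes m q :: real
  defines "p \<equiv> \<lambda>t::real. m * t + q / 2 * t ^ 2"
  shows "(deriv ^^ 1) p 0 = m" "(deriv ^^ 2) p 0 = q" "j \<ge> 3 \<Longrightarrow> (deriv ^^ j) p 0 = 0"
proof -
  have d1: "deriv p = (\<lambda>t. m + q * t)"
    unfolding p_def by (rule ext, rule DERIV_imp_deriv) (auto intro!: derivative_eq_intros)
  have d2: "deriv (\<lambda>t::real. m + q * t) = (\<lambda>t. q)"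
    by (rule ext, rule DERIV_imp_deriv) (auto intro!: derivative_eq_intros)
  show "(deriv ^^ 1) p 0 = m" using d1 by simp
  show "(deriv ^^ 2) p 0 = q" using d1 d2 by (simp add: numeral_2_eq_2)
  assume "j \<ge> 3"
  then obtain r where r: "j = r + 3" by (metis add.commute le_add_diff_inverse)
  have "(deriv ^^ 3) p = (\<lambda>t. 0)" using d1 d2 by (simp add: numeral_3_eq_3)
  then show "(deriv ^^ j) p 0 = 0" unfolding r funpow_add o_def by (simp add: higher_deriv_zero)
qed

lemma Cn_quad: assumes "open U" shows "Cn n U (\<lambda>t::real. m * t + q / 2 * t ^ 2)"
proof -
  have "Cn n U (\<lambda>t. (\<lambda>t. m) t * (\<lambda>t. t) t + (\<lambda>t. q/2) t * ((\<lambda>t. t) t * (\<lambda>t. t) t))"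
    by (intro Cn_add Cn_mult Cn_const Cn_ident assms)
  then show ?thesis by (simp add: power2_eq_square)
qed


lemma key1d:
  fixes lam a :: "nat \<Rightarrow> real" and q :: real
  assumes sl: "(\<Sum>i<k. lam i) = 1"
  defines "m \<equiv> \<Sum>i<k. lam i * a i"
  defines "g \<equiv> \<lambda>t. ln (\<Sum>i<k. lam i * exp (t * a i + 1/2 * t^2 * q))"
  defines "h \<equiv> \<lambda>t. ln (\<Sum>i<k. lam i * exp (t * (a i - m)))"
  shows "taylor_coeff g 1 = m" "taylor_coeff g 2 = ((\<Sum>i<k. lam i * (a i - m)^2) + q)/2"
    "j \<ge> 3 \<Longrightarrow> taylor_coeff g j = taylor_coeff h j"
proof -
  define b where "b = (\<lambda>i. a i - m)"
  define P where "P = expsum k lam b"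
  define P1 where "P1 = expsum k (\<lambda>i. lam i * b i) b"
  define P2 where "P2 = expsum k (\<lambda>i. lam i * b i * b i) b"
  define p where "p = (\<lambda>t::real. m * t + q / 2 * t ^ 2)"
  define U where "U = {t. P t > 0}"
  have hP: "h = (\<lambda>t. ln (P t))" unfolding h_def P_def expsum_def b_def ..
  have contP: "continuous_on UNIV P"
    unfolding P_def expsum_def by (intro continuous_intros)
  have U: "open U" unfolding U_def
    by (rule open_Collect_less[OF continuous_on_const contP])
  have P0: "P 0 = 1" using sl by (simp add: P_def expsum_def)
  have U0: "0 \<in> U" using P0 by (simp add: U_def)
  have sb: "(\<Sum>i<k. lam i * b i) = 0"
    using sl by (simp add: b_def m_def algebra_simps sum_subtractf sum_distrib_right[symmetric])
  have P10: "P1 0 = 0" using sb by (simp add: P1_def expsum_def)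
  have P20: "P2 0 = (\<Sum>i<k. lam i * (a i - m)^2)" by (simp add: P2_def expsum_def b_def power2_eq_square mult_ac)
  have dP: "deriv P = P1" unfolding P_def P1_def deriv_expsum ..
  have dP1: "deriv P1 = P2" unfolding P2_def P1_def deriv_expsum ..
  have geq: "g t = h t + p t" if "t \<in> U" for t
  proof -
    have "(\<Sum>i<k. lam i * exp (t * a i + 1/2 * t^2 * q)) = P t * exp (p t)"
      unfolding P_def expsum_def sum_distrib_right
      by (rule sum.cong) (auto simp: p_def b_def algebra_simps simp flip: exp_add)
    then show ?thesis using that by (simp add: g_def hP U_def ln_mult)
  qed
  have hD: "DERIV h t :> P1 t / P t" if "t \<in> U" for t
  proof -
    have "DERIV P t :> P1 t" unfolding P_def P1_def by (rule DERIV_expsum)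
    then show ?thesis unfolding hP using that
      by (auto simp: U_def intro!: derivative_eq_intros)
  qed
  have dh: "deriv h t = P1 t * inverse (P t)" if "t \<in> U" for t
    using hD[OF that] by (simp add: DERIV_imp_deriv field_simps)
  have Ch: "Cn n U h" for n
  proof (cases n)
    case 0 then show ?thesis using hD by (auto simp: Cn_def field_differentiable_def)
  next
    case (Suc n')
    have "Cn n' U (\<lambda>t. P1 t * inverse (P t))"
      unfolding P1_def P_def
      by (intro Cn_mult Cn_inverse U Cn_expsum) (auto simp: U_def P_def)
    then have "Cn n' U (deriv h)" by (rule Cn_cong[OF U dh, rotated])
    then show ?thesis using hD Suc by (auto simp: Cn_Suc field_differentiable_def)
  qed
  have main: "(deriv ^^ j) g 0 = (deriv ^^ j) h 0 + (deriv ^^ j) p 0" for j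
  proof -
    have "(deriv ^^ j) g 0 = (deriv ^^ j) (\<lambda>t. h t + p t) 0"
      by (rule higher_deriv_cong_open[OF U geq U0])
    also have "\<dots> = (deriv ^^ j) h 0 + (deriv ^^ j) p 0"
      unfolding p_def by (rule higher_deriv_add_Cn[OF U Ch Cn_quad[OF U], where n=j and i=j]) (use U0 in auto)
    finally show ?thesis .
  qed
  have h1: "(deriv ^^ 1) h 0 = 0" using dh[OF U0] P10 by simp
  have h2: "(deriv ^^ 2) h 0 = P2 0"
  proof -
    have "(deriv ^^ 2) h 0 = deriv (deriv h) 0" by (simp add: numeral_2_eq_2)
    also have "\<dots> = deriv (\<lambda>t. P1 t / P t) 0"
      by (rule deriv_cong_ev) (use U U0 dh in \<open>auto simp: eventually_nhds field_simps\<close>)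
    also have "\<dots> = (deriv P1 0 * P 0 - P1 0 * deriv P 0) / P 0 ^ 2"
      using P0 unfolding P_def P1_def by (intro deriv_divide fd_expsum) auto
    also have "\<dots> = P2 0" using P0 P10 dP dP1 by simp
    finally show ?thesis .
  qed
  show "taylor_coeff g 1 = m"
    unfolding taylor_coeff_def main h1 p_def quad_derivs by simp
  show "taylor_coeff g 2 = ((\<Sum>i<k. lam i * (a i - m)^2) + q)/2"
    unfolding taylor_coeff_def main h2 p_def quad_derivs P20 by (simp add: numeral_2_eq_2)
  assume "j \<ge> 3"
  then show "taylor_coeff g j = taylor_coeff h j"
    unfolding taylor_coeff_def main p_def using quad_derivs(3) by simp
qed



lemma Khom_line:
  "(\<lambda>t. K_hom k mu lam S (t *\<^sub>R v)) =
   (\<lambda>t. ln (\<Sum>i<k. lam i * exp (t * (mu i \<bullet> v) + 1/2 * t^2 * (v \<bullet> (S *v v)))))"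
  by (rule ext) (simp add: K_hom_def matrix_vector_mult_scaleR power2_eq_square mult_ac)

lemma KA_line:
  "(\<lambda>t. K_A k L lam (t *\<^sub>R v)) = (\<lambda>t. ln (\<Sum>i<k. lam i * exp (t * (L i \<bullet> v))))"
  by (rule ext) (simp add: K_A_def mult_ac)

lemma hom_Khom:
  fixes mu :: "nat \<Rightarrow> real^'n::finite"
  assumes sl: "(\<Sum>i<k. lam i) = 1"
  defines "w \<equiv> (\<Sum>i<k. lam i *\<^sub>R mu i)"
  shows "hom_part (K_hom k mu lam S) 1 v = w \<bullet> v"
    "hom_part (K_hom k mu lam S) 2 v = ((\<Sum>i<k. lam i * ((mu i - w) \<bullet> v)^2) + v \<bullet> (S *v v)) / 2"
    "j \<ge> 3 \<Longrightarrow> hom_part (K_hom k mu lam S) j v = hom_part (K_A k (\<lambda>i. mu i - w) lam) j v"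
proof -
  have wv: "w \<bullet> v = (\<Sum>i<k. lam i * (mu i \<bullet> v))"
    unfolding w_def by (simp add: inner_sum_left)
  have b: "(mu i - w) \<bullet> v = mu i \<bullet> v - (\<Sum>i<k. lam i * (mu i \<bullet> v))" for i
    by (simp add: inner_diff_left wv)
  note K = key1d[OF sl, where a="\<lambda>i. mu i \<bullet> v" and q="v \<bullet> (S *v v)"]
  show "hom_part (K_hom k mu lam S) 1 v = w \<bullet> v"
    unfolding hom_part_def Khom_line K(1) wv ..
  show "hom_part (K_hom k mu lam S) 2 v = ((\<Sum>i<k. lam i * ((mu i - w) \<bullet> v)^2) + v \<bullet> (S *v v)) / 2"
    unfolding hom_part_def Khom_line K(2) b ..
  assume "j \<ge> 3"
  then show "hom_part (K_hom k mu lam S) j v = hom_part (K_A k (\<lambda>i. mu i - w) lam) j v"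
    unfolding hom_part_def Khom_line K(3)[OF \<open>j \<ge> 3\<close>] KA_line b by simp
qed

lemma qf: "v \<bullet> (M *v v) = (\<Sum>r\<in>UNIV. \<Sum>c\<in>UNIV. v$r * M$r$c * v$c)" for v :: "real^'n::finite"
  by (simp add: inner_vec_def matrix_vector_mult_def sum_distrib_left mult_ac)

lemma sqinner: "(L \<bullet> v)^2 = (\<Sum>r\<in>UNIV. \<Sum>c\<in>UNIV. v$r * (L$r * L$c) * v$c)" for v :: "real^'n::finite"
  by (simp add: inner_vec_def power2_eq_square sum_product mult_ac)


lemma sum_swap_lam:
  "(\<Sum>r\<in>UNIV. \<Sum>c\<in>UNIV. (\<Sum>i<k. f i r c)) = (\<Sum>i<k. \<Sum>r\<in>UNIV. \<Sum>c\<in>UNIV. f i r c)"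
  by (simp add: sum.swap[of _ "{..<k}"])

lemma qf_lam:
  fixes v :: "real^'n::finite"
  shows "(\<Sum>r\<in>UNIV. \<Sum>c\<in>UNIV. v$r * (\<Sum>i<k. lam i * (L i$r * L i$c)) * v$c) = (\<Sum>i<k. lam i * (L i \<bullet> v)^2)"
proof -
  have "(\<Sum>r\<in>UNIV. \<Sum>c\<in>UNIV. v$r * (\<Sum>i<k. lam i * (L i$r * L i$c)) * v$c)
      = (\<Sum>r\<in>UNIV. \<Sum>c\<in>UNIV. (\<Sum>i<k. lam i * (v$r * (L i$r * L i$c) * v$c)))"
    by (simp add: sum_distrib_left sum_distrib_right mult_ac)
  also have "\<dots> = (\<Sum>i<k. lam i * (L i \<bullet> v)^2)"
    unfolding sum_swap_lam sqinner by (simp add: sum_distrib_left)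
  finally show ?thesis .
qed

lemma qf_dir1:
  fixes v :: "real^'n::finite"
  shows "v \<bullet> ((\<chi> r c. (A$r$c + (\<Sum>i<k. lam i * (L i$r * L i$c))) / 2) *v v)
     = ((\<Sum>i<k. lam i * (L i \<bullet> v)^2) + v \<bullet> (A *v v)) / 2"
proof -
  have "v \<bullet> ((\<chi> r c. (A$r$c + (\<Sum>i<k. lam i * (L i$r * L i$c))) / 2) *v v)
     = ((\<Sum>r\<in>UNIV. \<Sum>c\<in>UNIV. v$r * A$r$c * v$c) + (\<Sum>r\<in>UNIV. \<Sum>c\<in>UNIV. v$r * (\<Sum>i<k. lam i * (L i$r * L i$c)) * v$c)) / 2"
    unfolding qf sum_divide_distrib sum.distrib[symmetric]
    by (intro sum.cong refl) (simp add: field_simps)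
  then show ?thesis unfolding qf_lam qf by simp
qed

lemma qf_dir2:
  fixes v :: "real^'n::finite"
  shows "v \<bullet> ((\<chi> r c. M$r$c + M$c$r - (\<Sum>i<k. lam i * (L i$r * L i$c))) *v v)
     = 2 * (v \<bullet> (M *v v)) - (\<Sum>i<k. lam i * (L i \<bullet> v)^2)"
proof -
  have sw: "(\<Sum>r\<in>UNIV. \<Sum>c\<in>UNIV. v$r * M$c$r * v$c) = (\<Sum>r\<in>UNIV. \<Sum>c\<in>UNIV. v$r * M$r$c * v$c)"
    by (subst sum.swap) (simp add: mult_ac)
  have "v \<bullet> ((\<chi> r c. M$r$c + M$c$r - (\<Sum>i<k. lam i * (L i$r * L i$c))) *v v)
     = (\<Sum>r\<in>UNIV. \<Sum>c\<in>UNIV. v$r * M$r$c * v$c) + (\<Sum>r\<in>UNIV. \<Sum>c\<in>UNIV. v$r * M$c$r * v$c)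
       - (\<Sum>r\<in>UNIV. \<Sum>c\<in>UNIV. v$r * (\<Sum>i<k. lam i * (L i$r * L i$c)) * v$c)"
    unfolding qf by (simp add: sum.distrib[symmetric] sum_subtractf[symmetric] algebra_simps)
  then show ?thesis unfolding qf_lam sw qf by simp
qed

lemma transpose_dir2:
  fixes M :: "real^'n::finite^'n"
  shows "transpose (\<chi> r c. M$r$c + M$c$r - (\<Sum>i<k. lam i * (L i$r * L i$c))) =
   (\<chi> r c. M$r$c + M$c$r - (\<Sum>i<k. lam i * (L i$r * L i$c)))"
  by (simp add: transpose_def vec_eq_iff mult_ac)



lemma cont_eval [continuous_intros]: "continuous_on S (\<lambda>c::'a \<Rightarrow> 'b \<Rightarrow> 'c::topological_space. c j v)"
  by (rule continuous_on_subset[OF continuous_on_product_then_coordinatewise[OF continuous_on_product_coordinates]]) simp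

lemma lin_char:
  fixes f :: "real^'n::finite \<Rightarrow> real"
  shows "(\<exists>w::real^'n. f = (\<lambda>v. w \<bullet> v)) \<longleftrightarrow> (\<forall>v. f v = (\<Sum>i\<in>UNIV. v$i * f (axis i 1)))"
proof
  assume "\<exists>w::real^'n. f = (\<lambda>v. w \<bullet> v)"
  then obtain w :: "real^'n" where fw: "f = (\<lambda>v. w \<bullet> v)" by blast
  show "\<forall>v. f v = (\<Sum>i\<in>UNIV. v$i * f (axis i 1))"
  proof
    fix v :: "real^'n"
    have "w \<bullet> axis i 1 = w$i" for i by (simp add: inner_axis)
    then show "f v = (\<Sum>i\<in>UNIV. v$i * f (axis i 1))" using fw
      by (simp add: inner_vec_def mult.commute)
  qed
next
  assume h: "\<forall>v. f v = (\<Sum>i\<in>UNIV. v$i * f (axis i 1))"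
  show "\<exists>w::real^'n. f = (\<lambda>v. w \<bullet> v)"
  proof (rule exI[of _ "\<chi> i. f (axis i 1)"], rule ext)
    fix v :: "real^'n"
    show "f v = (\<chi> i. f (axis i 1)) \<bullet> v" using h[rule_format, of v]
      by (simp add: inner_vec_def mult.commute)
  qed
qed

definition qsum :: "(real^'n::finite \<Rightarrow> real) \<Rightarrow> real^'n \<Rightarrow> real" where
  "qsum f v = (\<Sum>r\<in>UNIV. \<Sum>s\<in>UNIV. v$r * ((f (axis r 1 + axis s 1) - f (axis r 1) - f (axis s 1)) / 2) * v$s)"

lemma axis_qf: "axis r 1 \<bullet> (M *v axis s 1) = M$r$s" for M :: "real^'n::finite^'n"
  unfolding matrix_vector_mult_basis column_def inner_commute[of "axis r 1"] by (simp add: inner_axis)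

lemma quad_char:
  fixes f :: "real^'n::finite \<Rightarrow> real"
  shows "(\<exists>M::real^'n^'n. f = (\<lambda>v. v \<bullet> (M *v v))) \<longleftrightarrow> (\<forall>v. f v = qsum f v)"
proof
  assume "\<exists>M::real^'n^'n. f = (\<lambda>v. v \<bullet> (M *v v))"
  then obtain M :: "real^'n^'n" where f: "f = (\<lambda>v. v \<bullet> (M *v v))" by blast
  have e: "(f (axis r 1 + axis s 1) - f (axis r 1) - f (axis s 1)) / 2 = (M$r$s + M$s$r)/2" for r s
    unfolding f by (simp add: matrix_vector_right_distrib inner_add_left inner_add_right axis_qf)
  have sw: "(\<Sum>r\<in>UNIV. \<Sum>c\<in>UNIV. v$r * M$c$r * v$c) = (\<Sum>r\<in>UNIV. \<Sum>c\<in>UNIV. v$r * M$r$c * v$c)" for v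
    by (subst sum.swap) (simp add: mult_ac)
  show "\<forall>v. f v = qsum f v"
  proof
    fix v :: "real^'n"
    have "qsum f v = ((\<Sum>r\<in>UNIV. \<Sum>c\<in>UNIV. v$r * M$r$c * v$c) + (\<Sum>r\<in>UNIV. \<Sum>c\<in>UNIV. v$r * M$c$r * v$c)) / 2"
      unfolding qsum_def e sum_divide_distrib sum.distrib[symmetric]
      by (intro sum.cong refl) (simp add: field_simps)
    then show "f v = qsum f v" unfolding sw f qf by simp
  qed
next
  assume h: "\<forall>v. f v = qsum f v"
  show "\<exists>M::real^'n^'n. f = (\<lambda>v. v \<bullet> (M *v v))"
  proof (rule exI[of _ "\<chi> r s. (f (axis r 1 + axis s 1) - f (axis r 1) - f (axis s 1)) / 2"], rule ext)
    fix v :: "real^'n"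
    have "v \<bullet> ((\<chi> r s. (f (axis r 1 + axis s 1) - f (axis r 1) - f (axis s 1)) / 2) *v v) = qsum f v"
      unfolding qf qsum_def by simp
    then show "f v = v \<bullet> ((\<chi> r s. (f (axis r 1 + axis s 1) - f (axis r 1) - f (axis s 1)) / 2) *v v)"
      using h by metis
  qed
qed



lemma Theta0_shift:
  fixes mu :: "nat \<Rightarrow> real^'n::finite"
  assumes sl: "(\<Sum>i<k. lam i) = 1"
  shows "((\<lambda>i. mu i - (\<Sum>i<k. lam i *\<^sub>R mu i)), lam) \<in> Theta0 k"
  using sl by (simp add: Theta0_def scaleR_diff_right sum_subtractf scaleR_sum_left[symmetric])

lemma cont_if_const: "continuous_on S f \<Longrightarrow> continuous_on S (\<lambda>x. if P then f x else c)"
  by (cases P) (simp_all add: continuous_on_const)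

lemma cont_if_const2: "continuous_on S f \<Longrightarrow> continuous_on S (\<lambda>x. if P then c else f x)"
  by (cases P) (simp_all add: continuous_on_const)

theorem lemma3p3:
  fixes k d :: nat
  assumes "k \<ge> 1" and "d \<ge> 3"
  shows "closure (logSecH_param k d :: 'n::finite cumvec set) = cone_over d (C0 k d)"
proof -
  define X where "X = (phi k d ` Theta0 k :: 'n cumvec set)"
  define proj where "proj = (\<lambda>c::'n cumvec. \<lambda>j. if 3 \<le> j \<and> j \<le> d then c j else (\<lambda>_. 0))"
  have C0: "C0 k d = closure X" by (simp add: C0_def X_def)
  have cone_eq: "cone_over d C = {c. \<forall>v. c 0 v = 0} \<inter> {c. \<forall>v. c 1 v = (\<Sum>i\<in>UNIV. v$i * c 1 (axis i 1))}
     \<inter> {c. \<forall>v. c 2 v = qsum (c 2) v} \<inter> {c. \<forall>j v. d < j \<longrightarrow> c j v = 0} \<inter> proj -` C" for C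
    unfolding cone_over_def proj_def lin_char[symmetric] quad_char[symmetric]
    by (auto simp: fun_eq_iff)
  have cont_proj: "continuous_on UNIV proj"
    unfolding proj_def
    by (intro continuous_on_coordinatewise_then_product cont_if_const continuous_on_product_coordinates)
  have closed_cone: "closed (cone_over d (closure X))"
    unfolding cone_eq
  proof (intro closed_Int closed_vimage[OF closed_closure cont_proj] closed_Collect_all)
    fix v :: "real^'n"
    show "closed {c::'n cumvec. c 0 v = 0}"
      by (intro closed_Collect_eq continuous_intros)
    show "closed {c::'n cumvec. c 1 v = (\<Sum>i\<in>UNIV. v$i * c 1 (axis i 1))}"
      by (intro closed_Collect_eq continuous_intros)
    show "closed {c::'n cumvec. c 2 v = qsum (c 2) v}"
      unfolding qsum_def by (intro closed_Collect_eq continuous_intros) auto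
  next
    fix j and v :: "real^'n"
    show "closed {c::'n cumvec. d < j \<longrightarrow> c j v = 0}"
      by (cases "d < j") (simp_all add: closed_Collect_eq continuous_intros)
  qed
  have sub1: "logSecH_param k d \<subseteq> cone_over d X"
  proof
    fix c :: "'n cumvec" assume "c \<in> logSecH_param k d"
    then obtain mu lam S where c: "c = cum_trunc d (K_hom k mu lam S)"
      and sl: "(\<Sum>i<k. lam i) = 1" by (auto simp: logSecH_param_def)
    define w where "w = (\<Sum>i<k. lam i *\<^sub>R mu i)"
    define L where "L = (\<lambda>i. mu i - w)"
    note H = hom_Khom[OF sl, where mu=mu and S=S, folded w_def, folded L_def]
    have h1: "c 1 = (\<lambda>v. w \<bullet> v)" using H(1) \<open>d \<ge> 3\<close> by (simp add: c cum_trunc_def fun_eq_iff)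
    have h2: "c 2 = (\<lambda>v. v \<bullet> ((\<chi> r c. (S$r$c + (\<Sum>i<k. lam i * (L i$r * L i$c))) / 2) *v v))"
      unfolding qf_dir1 using H(2) \<open>d \<ge> 3\<close> by (simp add: c cum_trunc_def fun_eq_iff L_def)
    have h3: "proj c = phi k d (L, lam)"
      using H(3) by (auto simp: c cum_trunc_def phi_def proj_def fun_eq_iff L_def)
    have h4: "(L, lam) \<in> Theta0 k" unfolding L_def w_def by (rule Theta0_shift[OF sl])
    have h0: "c 0 = (\<lambda>_. 0)" by (simp add: c cum_trunc_def)
    have hd: "\<forall>j>d. c j = (\<lambda>_. 0)" by (simp add: c cum_trunc_def)
    have hX: "(\<lambda>j. if 3 \<le> j \<and> j \<le> d then c j else (\<lambda>_. 0)) \<in> X"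
      using h3 h4 unfolding proj_def X_def by (metis image_eqI)
    show "c \<in> cone_over d X"
      unfolding cone_over_def using h0 h1 h2 hd hX by blast
  qed
  have mono: "cone_over d X \<subseteq> cone_over d (closure X)"
    unfolding cone_over_def using closure_subset by blast
  show ?thesis
  proof
    show "closure (logSecH_param k d :: 'n cumvec set) \<subseteq> cone_over d (C0 k d)"
      unfolding C0 by (rule closure_minimal[OF _ closed_cone]) (use sub1 mono in blast)
  next
    show "cone_over d (C0 k d) \<subseteq> closure (logSecH_param k d :: 'n cumvec set)"
    proof
      fix c :: "'n cumvec" assume "c \<in> cone_over d (C0 k d)"
      then obtain w M where c0: "c 0 = (\<lambda>_. 0)" and c1: "c 1 = (\<lambda>v. w \<bullet> v)"
        and c2: "c 2 = (\<lambda>v. v \<bullet> (M *v v))" and cd: "\<forall>j>d. c j = (\<lambda>_. 0)"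
        and cp: "proj c \<in> closure X"
        unfolding cone_over_def C0 proj_def by blast
      define F where "F = (\<lambda>x::'n cumvec. \<lambda>j. if j = 1 then c 1 else if j = 2 then c 2 else proj x j)"
      have contF: "continuous_on UNIV F"
        unfolding F_def
        by (intro continuous_on_coordinatewise_then_product cont_if_const2
              continuous_on_product_then_coordinatewise[OF cont_proj])
      have Fc: "F (proj c) = c"
      proof (rule ext)
        fix j
        show "F (proj c) j = c j"
          using c0 cd by (cases "j = 0"; cases "j = 1"; cases "j = 2"; cases "j > d")
                         (auto simp: F_def proj_def)
      qed
      have FX: "F ` X \<subseteq> logSecH_param k d"
      proof
        fix y :: "'n cumvec" assume "y \<in> F ` X"
        then obtain L lam where y: "y = F (phi k d (L, lam))" and th: "(L, lam) \<in> Theta0 k"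
          unfolding X_def by auto
        have sl: "(\<Sum>i<k. lam i) = 1" and sL: "(\<Sum>i<k. lam i *\<^sub>R L i) = 0"
          using th by (auto simp: Theta0_def)
        define mu where "mu = (\<lambda>i. L i + w)"
        define S where "S = (\<chi> r c. M$r$c + M$c$r - (\<Sum>i<k. lam i * (L i$r * L i$c)))"
        have wmu: "(\<Sum>i<k. lam i *\<^sub>R mu i) = w"
          using sl sL by (simp add: mu_def scaleR_add_right sum.distrib scaleR_sum_left[symmetric])
        have Lmu: "(\<lambda>i. mu i - w) = L" by (simp add: mu_def)
        note H = hom_Khom[OF sl, where mu=mu and S=S, unfolded wmu Lmu]
        have "y = cum_trunc d (K_hom k mu lam S)"
        proof (rule ext, rule ext)
          fix j v
          show "y j v = cum_trunc d (K_hom k mu lam S) j v"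
          proof -
            consider "j = 0" | "j = 1" | "j = 2" | "3 \<le> j \<and> j \<le> d" | "d < j" by linarith
            then show ?thesis
            proof cases
              case 1 then show ?thesis by (simp add: y F_def proj_def cum_trunc_def)
            next
              case 2 then show ?thesis using H(1) c1 \<open>d \<ge> 3\<close> by (simp add: y F_def cum_trunc_def)
            next
              case 3 then show ?thesis using H(2) \<open>d \<ge> 3\<close>
                by (simp add: y F_def c2 cum_trunc_def S_def qf_dir2 mu_def)
            next
              case 4 then show ?thesis using H(3)[of j v]
                by (simp add: y F_def proj_def cum_trunc_def phi_def)
            next
              case 5 then show ?thesis using \<open>d \<ge> 3\<close> by (simp add: y F_def proj_def cum_trunc_def)
            qed
          qed
        qed
        moreover have "transpose S = S" unfolding S_def by (rule transpose_dir2)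
        ultimately show "y \<in> logSecH_param k d"
          unfolding logSecH_param_def
          by (intro CollectI exI[of _ mu] exI[of _ lam] exI[of _ S] conjI sl)
      qed
      have FC: "F ` closure X \<subseteq> closure (logSecH_param k d :: 'n cumvec set)"
        by (rule image_closure_subset[OF continuous_on_subset[OF contF] closed_closure])
           (use FX closure_subset in auto)
      have "F (proj c) \<in> F ` closure X" using cp by (rule imageI)
      then show "c \<in> closure (logSecH_param k d :: 'n cumvec set)" using FC unfolding Fc by (rule subsetD[rotated])
    qed
  qed
qed

end
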